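(* Let $\mathcal{B}(\mathbb{R}^d)$ be the Boolean logic of Borel subsets of $\mathbb{R}^d$ (order $\subset$, orthocomplement $A\mapsto A^c=\mathbb{R}^d\setminus A$, join $\cup$, meet $\cap$), and let $\mathcal{C}(\mathbb{R}^{d+1})$ be the logic of causally complete subsets of Minkowski space described in the context. The causal completion map $$\mathrm{c}:\mathcal{B}(\mathbb{R}^d)\to\mathcal{C}(\mathbb{R}^{d+1}),\qquad \mathrm{c}(A):=(\{0\}\times A)''$$ is an injective $\sigma$-additive logic homomorphism (so that $\mathrm{c}(\mathcal{B}(\mathbb{R}^d))$ is a Boolean sublogic of $\mathcal{C}(\mathbb{R}^{d+1})$), and it is covariant with respect to the actions of the Euclidean group $\mathbf{E}(d)$ on $\mathcal{B}(\mathbb{R}^d)$ (by $A\mapsto g(A)$) and on $\mathcal{C}(\mathbb{R}^{d+1})$ (by $\mathcal{O}\mapsto \{(x_0,g\mathbf{x}):(x_0,\mathbf{x})\in\mathcal{O}\}$), i.e. $\mathrm{c}(g(A))=g\,\mathrm{c}(A)$.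
   Context: Minkowski space $\mathbb{R}^{d+1}$ has points $x=(x_0,\mathbf{x})\in\mathbb{R}\times\mathbb{R}^d$ and Lorentz product $x\cdot y=x_0y_0-\mathbf{x}\cdot\mathbf{y}$, $x^2=x\cdot x$. Write $x\sim y$ iff $x\neq y$ and $(x-y)^2\le 0$ (non-timelike separation). For $\mathcal{O}\subset\mathbb{R}^{d+1}$ its causal complement is $\mathcal{O}'=\{x: x\sim y\ \forall y\in\mathcal{O}\}$; $\mathcal{O}$ is causally complete if $\mathcal{O}=\mathcal{O}''$. $\mathcal{C}(\mathbb{R}^{d+1})$ is the set of causally complete subsets; with order $\subset$, orthocomplementation $\mathcal{O}\mapsto\mathcal{O}'$, $0=\emptyset$, $1=\mathbb{R}^{d+1}$, join $\mathcal{O}_1\vee\mathcal{O}_2=(\mathcal{O}_1\cup\mathcal{O}_2)''$ (and arbitrary joins $(\bigcup\mathcal{O}_i)''$), meet $\cap$, it is a complete orthomodular orthocomplemented lattice (a logic). A logic is a $\sigma$-complete orthocomplemented orthomodular bounded lattice. A logic homomorphism preserves $0,1$, the orthocomplement, binary joins and meets. A map $\varphi$ between such lattices is $\sigma$-additive if $\varphi(\bigvee_{A\in\mathcal{L}_0}A)=\bigvee_{A\in\mathcal{L}_0}\varphi(A)$ for every countable subset $\mathcal{L}_0$ whose distinct elements are pairwise separated ($A\le B^\perp$). *)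

theory Defs
  imports "HOL-Analysis.Analysis"
begin

text \<open>Minkowski space R^{d+1} is modelled as real \<times> (real ^ 'n), with d = CARD('n).
  Lorentz square of a point (x0, x): x0^2 - |x|^2.\<close>

definition lorentz_sq :: "real \<times> (real ^ 'n) \<Rightarrow> real" where
  "lorentz_sq x = (fst x)\<^sup>2 - (norm (snd x))\<^sup>2"

definition causally_sep :: "real \<times> (real ^ 'n) \<Rightarrow> real \<times> (real ^ 'n) \<Rightarrow> bool" where
  "causally_sep x y \<longleftrightarrow> x \<noteq> y \<and> lorentz_sq (x - y) \<le> 0"

definition ccompl :: "(real \<times> (real ^ 'n)) set \<Rightarrow> (real \<times> (real ^ 'n)) set" where
  "ccompl S = {x. \<forall>y\<in>S. causally_sep x y}"

definition causally_complete :: "(real \<times> (real ^ 'n)) set \<Rightarrow> bool" where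
  "causally_complete S \<longleftrightarrow> ccompl (ccompl S) = S"

definition cjoin :: "(real \<times> (real ^ 'n)) set set \<Rightarrow> (real \<times> (real ^ 'n)) set" where
  "cjoin F = ccompl (ccompl (\<Union>F))"

definition cmap :: "(real ^ 'n) set \<Rightarrow> (real \<times> (real ^ 'n)) set" where
  "cmap A = ccompl (ccompl ({0} \<times> A))"

definition euclidean_motion :: "(real ^ 'n \<Rightarrow> real ^ 'n) \<Rightarrow> bool" where
  "euclidean_motion g \<longleftrightarrow> (\<exists>f b. orthogonal_transformation f \<and> g = (\<lambda>x. f x + b))"

definition mink_act :: "(real ^ 'n \<Rightarrow> real ^ 'n) \<Rightarrow> (real \<times> (real ^ 'n)) set \<Rightarrow> (real \<times> (real ^ 'n)) set" where
  "mink_act g S = (\<lambda>(t, x). (t, g x)) ` S"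

end

theory Submission
  imports Defs
begin

definition TT :: "(real ^ 'n) set \<Rightarrow> (real \<times> (real ^ 'n)) set" where
  "TT A = {(t, y). y \<in> A \<and> (\<forall>z. z \<notin> A \<longrightarrow> \<bar>t\<bar> \<le> dist y z)}"

lemma sep_iff:
  "causally_sep (t, y) (s, z) \<longleftrightarrow> (t, y) \<noteq> (s, z) \<and> \<bar>t - s\<bar> \<le> dist y z"
proof -
  have "lorentz_sq ((t, y) - (s, z)) \<le> 0 \<longleftrightarrow> (t - s)\<^sup>2 \<le> (dist y z)\<^sup>2"
    by (simp add: lorentz_sq_def dist_norm)
  also have "\<dots> \<longleftrightarrow> \<bar>t - s\<bar> \<le> \<bar>dist y z\<bar>"
    by (metis abs_le_square_iff)
  finally show ?thesis by (simp add: causally_sep_def)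
qed

lemma disc_step:
  fixes P :: "nat \<Rightarrow> bool"
  shows "P 0 \<Longrightarrow> \<not> P n \<Longrightarrow> \<exists>k<n. P k \<and> \<not> P (Suc k)"
proof (induction n)
  case 0 then show ?case by simp
next
  case (Suc n)
  show ?case
  proof (cases "P n")
    case True then show ?thesis using Suc by auto
  next
    case False then show ?thesis using Suc by (metis less_SucI)
  qed
qed

lemma segment_lemma:
  fixes y z :: "real ^ 'n"
  assumes "y \<in> A" "z \<notin> A" "e > 0"
  shows "\<exists>a\<in>A. \<exists>b. b \<notin> A \<and> dist y b + dist a z \<le> dist y z + e"
proof -
  define L where "L = dist y z"
  obtain n :: nat where n: "L / e < real n" using reals_Archimedean2 by blast
  have Lnn: "L \<ge> 0" by (simp add: L_def)
  then have npos: "n > 0" using n \<open>e > 0\<close>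
    by (metis divide_nonneg_pos not_gr0 not_less of_nat_0)
  define p where "p k = y + (real k / real n) *\<^sub>R (z - y)" for k
  have p0: "p 0 = y" by (simp add: p_def)
  have pn: "p n = z" using npos by (simp add: p_def)
  obtain k where k: "k < n" "p k \<in> A" "p (Suc k) \<notin> A"
    using disc_step[of "\<lambda>k. p k \<in> A" n] p0 pn assms by auto
  have d1: "dist y (p j) = real j / real n * L" for j
    by (simp add: p_def dist_norm L_def norm_minus_commute)
  have d2: "dist (p j) z = (1 - real j / real n) * L" if "j \<le> n" for j
  proof -
    have "z - p j = (1 - real j / real n) *\<^sub>R (z - y)"
      by (simp add: p_def algebra_simps)
    moreover have "1 - real j / real n \<ge> 0" using that npos by simp
    ultimately show ?thesis by (simp add: dist_norm L_def norm_minus_commute)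
  qed
  have "dist y (p (Suc k)) + dist (p k) z = L + L / real n"
    using d1[of "Suc k"] d2[of k] k(1) npos by (simp add: field_simps)
  also have "L / real n \<le> e"
    using n npos \<open>e > 0\<close> by (simp add: field_simps)
  finally show ?thesis using k L_def by fastforce
qed

lemma L1: fixes A :: "(real ^ 'n) set" shows "ccompl ({0} \<times> A) = TT (- A)"
proof (rule set_eqI)
  fix x :: "real \<times> (real ^ 'n)"
  obtain t y where x: "x = (t, y)" by fastforce
  show "x \<in> ccompl ({0} \<times> A) \<longleftrightarrow> x \<in> TT (- A)"
  proof
    assume h: "x \<in> ccompl ({0} \<times> A)"
    then have h': "\<forall>a\<in>A. (t, y) \<noteq> (0, a) \<and> \<bar>t\<bar> \<le> dist y a"
      by (auto simp: ccompl_def x sep_iff)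
    have "y \<notin> A"
    proof
      assume "y \<in> A"
      then show False using h'[rule_format, of y] by auto
    qed
    then show "x \<in> TT (- A)" using h' by (auto simp: TT_def x)
  next
    assume "x \<in> TT (- A)"
    then show "x \<in> ccompl ({0} \<times> A)" by (auto simp: TT_def x ccompl_def sep_iff)
  qed
qed

lemma L2: fixes B :: "(real ^ 'n) set" shows "ccompl (TT B) = TT (- B)"
proof (rule set_eqI)
  fix x :: "real \<times> (real ^ 'n)"
  obtain t y where x: "x = (t, y)" by fastforce
  show "x \<in> ccompl (TT B) \<longleftrightarrow> x \<in> TT (- B)"
  proof
    assume h: "x \<in> ccompl (TT B)"
    have h0: "(0, z) \<in> TT B" if "z \<in> B" for z using that by (simp add: TT_def)
    have h': "\<forall>z\<in>B. (t, y) \<noteq> (0, z) \<and> \<bar>t\<bar> \<le> dist y z"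
    proof
      fix z assume "z \<in> B"
      then have "causally_sep (t, y) (0, z)" using h h0 by (auto simp: ccompl_def x)
      then show "(t, y) \<noteq> (0, z) \<and> \<bar>t\<bar> \<le> dist y z" by (simp add: sep_iff)
    qed
    have "y \<notin> B"
    proof
      assume "y \<in> B"
      then show False using h'[rule_format, of y] by auto
    qed
    then show "x \<in> TT (- B)" using h' by (auto simp: TT_def x)
  next
    assume h: "x \<in> TT (- B)"
    then have y: "y \<notin> B" and ht: "\<And>z. z \<in> B \<Longrightarrow> \<bar>t\<bar> \<le> dist y z"
      by (auto simp: TT_def x)
    show "x \<in> ccompl (TT B)"
      unfolding ccompl_def
    proof (safe)
      fix s z assume sz: "(s, z) \<in> TT B"
      then have z: "z \<in> B" and hs: "\<And>w. w \<notin> B \<Longrightarrow> \<bar>s\<bar> \<le> dist z w"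
        by (auto simp: TT_def)
      have "\<bar>t\<bar> + \<bar>s\<bar> \<le> dist y z + e" if "e > 0" for e
      proof -
        obtain a b where a: "a \<in> - B" and b: "b \<notin> - B"
          and ab: "dist y b + dist a z \<le> dist y z + e"
          using segment_lemma[of y "- B" z e] y z \<open>e > 0\<close> by auto
        have "\<bar>t\<bar> \<le> dist y b" using ht b by auto
        moreover have "\<bar>s\<bar> \<le> dist a z" using hs a by (auto simp: dist_commute)
        ultimately show ?thesis using ab by linarith
      qed
      then have "\<bar>t\<bar> + \<bar>s\<bar> \<le> dist y z" by (rule field_le_epsilon)
      then have "\<bar>t - s\<bar> \<le> dist y z" by linarith
      moreover have "(t, y) \<noteq> (s, z)" using y z by auto
      ultimately show "causally_sep x (s, z)" by (simp add: x sep_iff)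
    qed
  qed
qed

lemma cmap_TT: "cmap A = TT A"
  unfolding cmap_def L1 L2 by simp

lemma TT_Inter: "TT (\<Inter> G) = \<Inter> (TT ` G)"
  by (auto simp: TT_def)

lemma ccompl_Un: "ccompl (\<Union> G) = \<Inter> (ccompl ` G)"
  by (auto simp: ccompl_def)

lemma TT_inj: "TT A = TT B \<Longrightarrow> A = B"
proof -
  assume "TT A = TT B"
  moreover have "\<And>C. TT C \<inter> ({0} \<times> UNIV) = {0} \<times> C" by (auto simp: TT_def)
  ultimately show "A = B" by (metis Sigma_cong times_eq_iff insert_not_empty)
qed

lemma join_gen: "cmap (\<Union> F) = cjoin (cmap ` F)"
proof -
  have "ccompl (\<Union> (cmap ` F)) = \<Inter> ((\<lambda>A. TT (- A)) ` F)"
    unfolding ccompl_Un by (simp add: cmap_TT L2 image_image)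
  also have "\<dots> = TT (\<Inter> ((\<lambda>A. - A) ` F))"
    by (simp add: TT_Inter image_image)
  also have "\<dots> = TT (- \<Union> F)"
  proof -
    have "\<Inter> (uminus ` F) = - \<Union> F" by blast
    then show ?thesis by simp
  qed
  finally show ?thesis unfolding cjoin_def by (simp add: L2 cmap_TT)
qed

lemma covariance:
  fixes g :: "real ^ 'n \<Rightarrow> real ^ 'n" and A :: "(real ^ 'n) set"
  assumes "euclidean_motion g"
  shows "cmap (g ` A) = mink_act g (cmap A)"
proof -
  obtain f b where f: "orthogonal_transformation f" and g: "g = (\<lambda>x. f x + b)"
    using assms by (auto simp: euclidean_motion_def)
  have iso: "dist (g x) (g y) = dist x y" for x y
    using f by (simp add: g orthogonal_transformation_isometry dist_norm)
  have inj: "inj g" unfolding inj_def using iso by (metis dist_eq_0_iff)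
  have surj: "surj g"
  proof -
    have "g (inv f (w - b)) = w" for w
      using f by (simp add: g orthogonal_transformation_surj surj_f_inv_f)
    then show ?thesis by (rule surjI)
  qed
  have "TT (g ` A) = mink_act g (TT A)"
  proof (rule set_eqI)
    fix x :: "real \<times> (real ^ 'n)"
    obtain t w where x: "x = (t, w)" by fastforce
    obtain y where w: "w = g y" using surj by (metis surjD)
    have mem: "g u \<in> g ` A \<longleftrightarrow> u \<in> A" for u using inj by (auto simp: inj_def)
    have "x \<in> TT (g ` A) \<longleftrightarrow> (t, y) \<in> TT A"
    proof -
      have "(\<forall>z. z \<notin> g ` A \<longrightarrow> \<bar>t\<bar> \<le> dist (g y) z) \<longleftrightarrow>
            (\<forall>z. z \<notin> A \<longrightarrow> \<bar>t\<bar> \<le> dist y z)"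
        by (metis mem iso surj surjD)
      then show ?thesis by (simp add: TT_def x w mem)
    qed
    also have "\<dots> \<longleftrightarrow> x \<in> mink_act g (TT A)"
      unfolding mink_act_def x w
      by (auto simp: TT_def inj_def inj[unfolded inj_def] image_iff) (metis inj injD)+
    finally show "x \<in> TT (g ` A) \<longleftrightarrow> x \<in> mink_act g (TT A)" .
  qed
  then show ?thesis by (simp add: cmap_TT)
qed

theorem lemma2p7:
  fixes c :: "(real ^ 'n) set \<Rightarrow> (real \<times> (real ^ 'n)) set"
  assumes c_def: "c = cmap"
  shows
    \<comment> \<open>c maps Borel sets into causally complete sets\<close>
    "(\<forall>A \<in> sets borel. causally_complete (c A))
     \<comment> \<open>logic homomorphism: 0, 1, orthocomplement, binary joins and meets\<close>
     \<and> c {} = {}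
     \<and> c UNIV = UNIV
     \<and> (\<forall>A \<in> sets borel. c (- A) = ccompl (c A))
     \<and> (\<forall>A \<in> sets borel. \<forall>B \<in> sets borel. c (A \<union> B) = cjoin {c A, c B})
     \<and> (\<forall>A \<in> sets borel. \<forall>B \<in> sets borel. c (A \<inter> B) = c A \<inter> c B)
     \<comment> \<open>injectivity\<close>
     \<and> inj_on c (sets borel)
     \<comment> \<open>sigma-additivity\<close>
     \<and> (\<forall>F. countable F \<and> F \<subseteq> sets borel
            \<and> (\<forall>A\<in>F. \<forall>B\<in>F. A \<noteq> B \<longrightarrow> A \<subseteq> - B)
            \<longrightarrow> c (\<Union>F) = cjoin (c ` F))
     \<comment> \<open>E(d)-covariance\<close>
     \<and> (\<forall>g. euclidean_motion g \<longrightarrow> (\<forall>A \<in> sets borel. c (g ` A) = mink_act g (c A)))"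
proof -
  have cc: "causally_complete (cmap A)" for A
    by (simp add: causally_complete_def cmap_TT L2)
  have e: "cmap {} = {}" by (auto simp: cmap_TT TT_def)
  have u: "cmap UNIV = UNIV" by (auto simp: cmap_TT TT_def)
  have n: "cmap (- A) = ccompl (cmap A)" for A by (simp add: cmap_TT L2)
  have j: "cmap (A \<union> B) = cjoin {cmap A, cmap B}" for A B
    using join_gen[of "{A, B}"] by simp
  have m: "cmap (A \<inter> B) = cmap A \<inter> cmap B" for A B
    using TT_Inter[of "{A, B}"] by (simp add: cmap_TT)
  have i: "inj_on cmap X" for X by (auto simp: inj_on_def cmap_TT dest: TT_inj)
  show ?thesis unfolding c_def
  proof (intro conjI ballI allI impI)
    fix F :: "(real ^ 'n) set set"
    show "cmap (\<Union> F) = cjoin (cmap ` F)" by (rule join_gen)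
  next
    fix g :: "real ^ 'n \<Rightarrow> real ^ 'n" and A :: "(real ^ 'n) set"
    assume "euclidean_motion g"
    then show "cmap (g ` A) = mink_act g (cmap A)" by (rule covariance)
  qed (simp_all add: cc e u n j m i)
qed

end
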